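(* Let $N\ge1$, $h,\beta,\epsilon>0$, let $\boldsymbol{\varrho}_{k-1}\in\mathbb{R}^N_{\ge0}$ be a probability vector, $\boldsymbol{\psi}_{k-1}\in\mathbb{R}^N$, and $\boldsymbol{C}_k\in\mathbb{R}^{N\times N}$ with entries in $[0,\infty)$. Let $\boldsymbol{\Gamma}_k:=\exp(-\boldsymbol{C}_k/(2\epsilon))$ and $\boldsymbol{\xi}_{k-1}:=\exp(-\beta\boldsymbol{\psi}_{k-1}-\mathbf{1})$ (entrywise). Then the iteration, for $\ell=1,2,\dots$, $$\boldsymbol{z}_{\ell+1}=\Big(\boldsymbol{\xi}_{k-1}\oslash\big(\boldsymbol{\Gamma}_k^{\top}\big(\boldsymbol{\varrho}_{k-1}\oslash(\boldsymbol{\Gamma}_k\boldsymbol{z}_\ell)\big)\big)\Big)^{\frac{1}{1+\beta\epsilon/h}}$$ (equivalently $\boldsymbol{z}_{\ell+1}=(\boldsymbol{\xi}_{k-1}\oslash(\boldsymbol{\Gamma}_k^\top\boldsymbol{y}_\ell))^{1/(1+\beta\epsilon/h)}$ with $\boldsymbol{y}_\ell=\boldsymbol{\varrho}_{k-1}\oslash(\boldsymbol{\Gamma}_k\boldsymbol{z}_\ell)$) defines a map of $\mathbb{R}^N_{>0}$ into itself that is strictly contractive with respect to the Thompson metric on $\mathbb{R}^N_{>0}$, and it admits a unique fixed point $\boldsymbol{z}^{\rm opt}\in\mathbb{R}^N_{>0}$.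
   Context: Thompson metric on the positive orthant: for $\boldsymbol{z},\tilde{\boldsymbol{z}}\in\mathbb{R}^N_{>0}$, $d_T(\boldsymbol{z},\tilde{\boldsymbol{z}})=\log\max\{\max_i \boldsymbol{z}_i/\tilde{\boldsymbol{z}}_i,\ \max_i\tilde{\boldsymbol{z}}_i/\boldsymbol{z}_i\}$; $(\mathbb{R}^N_{>0},d_T)$ is a complete metric space. Strictly contractive means $d_T(\boldsymbol{\theta}(\boldsymbol{z}),\boldsymbol{\theta}(\tilde{\boldsymbol{z}}))\le c\,d_T(\boldsymbol{z},\tilde{\boldsymbol{z}})$ for some $c<1$. Notation: $\oslash$ is entrywise division; $\exp$ and powers are entrywise; $\mathbf{1}$ is the all-ones vector. (The iteration is the block-coordinate scheme used to solve $\boldsymbol{y}\odot(\boldsymbol{\Gamma}_k\boldsymbol{z})=\boldsymbol{\varrho}_{k-1}$, $\boldsymbol{z}\odot(\boldsymbol{\Gamma}_k^\top\boldsymbol{y})=\boldsymbol{\xi}_{k-1}\odot\boldsymbol{z}^{-\beta\epsilon/h}$ arising in an entropically regularized JKO proximal step.) *)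

theory Defs
  imports "HOL-Analysis.Analysis"
begin

text \<open>Vectors in R^N are rendered as real^'n with 'n a finite index type (N = CARD('n) >= 1).\<close>

definition pos_orthant :: "(real^'n) set" where
  "pos_orthant = {z. \<forall>i. z $ i > 0}"

definition thompson_dist :: "real^'n::finite \<Rightarrow> real^'n \<Rightarrow> real" where
  "thompson_dist z w =
     ln (max (Max (range (\<lambda>i. z $ i / w $ i))) (Max (range (\<lambda>i. w $ i / z $ i))))"

definition Gamma_mat :: "real \<Rightarrow> real^'n^'n \<Rightarrow> real^'n^'n" where
  "Gamma_mat \<epsilon> C = (\<chi> i j. exp (- C $ i $ j / (2 * \<epsilon>)))"

definition xi_vec :: "real \<Rightarrow> real^'n \<Rightarrow> real^'n" where
  "xi_vec \<beta> \<psi> = (\<chi> i. exp (- \<beta> * \<psi> $ i - 1))"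

definition theta_map ::
  "real \<Rightarrow> real \<Rightarrow> real \<Rightarrow> real^'n::finite \<Rightarrow> real^'n \<Rightarrow> real^'n^'n \<Rightarrow> real^'n \<Rightarrow> real^'n" where
  "theta_map h \<beta> \<epsilon> \<rho> \<psi> C z =
    (let \<Gamma> = Gamma_mat \<epsilon> C;
         y = (\<chi> i. \<rho> $ i / (\<Gamma> *v z) $ i);
         g = transpose \<Gamma> *v y
     in (\<chi> j. (xi_vec \<beta> \<psi> $ j / g $ j) powr (1 / (1 + \<beta> * \<epsilon> / h))))"

end

theory Submission
  imports Defs
begin

definition LD :: "real^'n::finite \<Rightarrow> real^'n \<Rightarrow> real" where
  "LD z w = Max (range (\<lambda>i. \<bar>ln (z $ i) - ln (w $ i)\<bar>))"

lemma LD_ge: "\<bar>ln (z $ i) - ln (w $ i)\<bar> \<le> LD z w"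
  unfolding LD_def by (rule Max_ge) auto

lemma LD_le_iff: "LD z w \<le> t \<longleftrightarrow> (\<forall>i. \<bar>ln (z $ i) - ln (w $ i)\<bar> \<le> t)"
  unfolding LD_def by (subst Max_le_iff) auto

lemma LD_less_iff: "LD z w < t \<longleftrightarrow> (\<forall>i. \<bar>ln (z $ i) - ln (w $ i)\<bar> < t)"
  unfolding LD_def by (subst Max_less_iff) auto

lemma LD_nonneg: "0 \<le> LD z w"
  using LD_ge[of z _ w] by (meson abs_ge_zero order_trans)

lemma LD_commute: "LD z w = LD w z"
  unfolding LD_def by (simp add: abs_minus_commute)

lemma ln_Max_range:
  fixes f :: "'n::finite \<Rightarrow> real"
  assumes "\<And>i. f i > 0"
  shows "ln (Max (range f)) = Max (range (\<lambda>i. ln (f i)))"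
proof -
  have "Max (range f) \<in> range f" by (rule Max_in) auto
  then obtain i0 where i0: "Max (range f) = f i0" by blast
  have "f i \<le> f i0" for i using Max_ge[of "range f" "f i"] i0 by simp
  hence "Max (range (\<lambda>i. ln (f i))) = ln (f i0)"
    by (intro Max_eqI) (auto simp: assms)
  thus ?thesis using i0 by simp
qed

lemma thompson_LD:
  assumes "z \<in> pos_orthant" "w \<in> pos_orthant"
  shows "thompson_dist z w = LD z w"
proof -
  have zp: "\<And>i. z $ i > 0" and wp: "\<And>i. w $ i > 0" using assms by (auto simp: pos_orthant_def)
  have A: "ln (Max (range (\<lambda>i. z $ i / w $ i))) = Max (range (\<lambda>i. ln (z $ i) - ln (w $ i)))"
  proof -
    have e: "(\<lambda>i. ln (z $ i / w $ i)) = (\<lambda>i. ln (z $ i) - ln (w $ i))"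
    proof
      fix i show "ln (z $ i / w $ i) = ln (z $ i) - ln (w $ i)" using zp[of i] wp[of i] by (simp add: ln_div)
    qed
    have "ln (Max (range (\<lambda>i. z $ i / w $ i))) = Max (range (\<lambda>i. ln (z $ i / w $ i)))"
      by (rule ln_Max_range) (simp add: zp wp)
    then show ?thesis by (simp only: e)
  qed
  have B: "ln (Max (range (\<lambda>i. w $ i / z $ i))) = Max (range (\<lambda>i. ln (w $ i) - ln (z $ i)))"
  proof -
    have e: "(\<lambda>i. ln (w $ i / z $ i)) = (\<lambda>i. ln (w $ i) - ln (z $ i))"
    proof
      fix i show "ln (w $ i / z $ i) = ln (w $ i) - ln (z $ i)" using wp[of i] zp[of i] by (simp add: ln_div)
    qed
    have "ln (Max (range (\<lambda>i. w $ i / z $ i))) = Max (range (\<lambda>i. ln (w $ i / z $ i)))"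
      by (rule ln_Max_range) (simp add: zp wp)
    then show ?thesis by (simp only: e)
  qed
  have pA: "Max (range (\<lambda>i. z $ i / w $ i)) > 0"
  proof -
    fix i
    have "z $ i / w $ i \<le> Max (range (\<lambda>i. z $ i / w $ i))" by (rule Max_ge) auto
    moreover have "z $ i / w $ i > 0" using zp[of i] wp[of i] by simp
    ultimately show ?thesis by linarith
  qed
  have pB: "Max (range (\<lambda>i. w $ i / z $ i)) > 0"
  proof -
    fix i
    have "w $ i / z $ i \<le> Max (range (\<lambda>i. w $ i / z $ i))" by (rule Max_ge) auto
    moreover have "w $ i / z $ i > 0" using zp[of i] wp[of i] by simp
    ultimately show ?thesis by linarith
  qed
  have "ln (max (Max (range (\<lambda>i. z $ i / w $ i))) (Max (range (\<lambda>i. w $ i / z $ i))))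
     = max (ln (Max (range (\<lambda>i. z $ i / w $ i)))) (ln (Max (range (\<lambda>i. w $ i / z $ i))))"
    using pA pB by (auto simp: max_def)
  also have "\<dots> = max (Max (range (\<lambda>i. ln (z $ i) - ln (w $ i)))) (Max (range (\<lambda>i. ln (w $ i) - ln (z $ i))))"
    using A B by simp
  also have "\<dots> = LD z w"
  proof (rule antisym)
    show "max (Max (range (\<lambda>i. ln (z $ i) - ln (w $ i)))) (Max (range (\<lambda>i. ln (w $ i) - ln (z $ i)))) \<le> LD z w"
      using LD_ge[of z _ w] by (auto simp: Max_le_iff abs_le_iff)
    show "LD z w \<le> max (Max (range (\<lambda>i. ln (z $ i) - ln (w $ i)))) (Max (range (\<lambda>i. ln (w $ i) - ln (z $ i))))"
    proof (unfold LD_le_iff, intro allI)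
      fix i
      have "ln (z $ i) - ln (w $ i) \<le> Max (range (\<lambda>i. ln (z $ i) - ln (w $ i)))"
        by (rule Max_ge) auto
      moreover have "ln (w $ i) - ln (z $ i) \<le> Max (range (\<lambda>i. ln (w $ i) - ln (z $ i)))"
        by (rule Max_ge) auto
      ultimately show "\<bar>ln (z $ i) - ln (w $ i)\<bar> \<le> max (Max (range (\<lambda>i. ln (z $ i) - ln (w $ i)))) (Max (range (\<lambda>i. ln (w $ i) - ln (z $ i))))"
        by linarith
    qed
  qed
  finally show ?thesis unfolding thompson_dist_def .
qed


lemma ln_bnd:
  fixes a b D :: real
  assumes "a > 0" "b > 0"
  shows "\<bar>ln a - ln b\<bar> \<le> D \<longleftrightarrow> a \<le> exp D * b \<and> b \<le> exp D * a"
proof -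
  have 1: "a \<le> exp D * b \<longleftrightarrow> ln a \<le> D + ln b"
    using assms by (subst ln_le_cancel_iff[symmetric]) (auto simp: ln_mult)
  have 2: "b \<le> exp D * a \<longleftrightarrow> ln b \<le> D + ln a"
    using assms by (subst ln_le_cancel_iff[symmetric]) (auto simp: ln_mult)
  show ?thesis unfolding 1 2 by linarith
qed

lemma LD_metric: "Metric_space pos_orthant LD"
proof
  fix x y :: "real^'a"
  show "0 \<le> LD x y" by (rule LD_nonneg)
  show "LD x y = LD y x" by (rule LD_commute)
next
  fix x y :: "real^'a"
  assume xy: "x \<in> pos_orthant" "y \<in> pos_orthant"
  show "LD x y = 0 \<longleftrightarrow> x = y"
  proof
    assume "LD x y = 0"
    hence "\<forall>i. \<bar>ln (x $ i) - ln (y $ i)\<bar> \<le> 0" using LD_le_iff[of x y 0] by simp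
    hence "\<forall>i. x $ i = y $ i" using xy by (auto simp: pos_orthant_def)
    thus "x = y" by (simp add: vec_eq_iff)
  next
    assume "x = y" thus "LD x y = 0" using LD_nonneg[of y y] LD_le_iff[of y y 0] by simp
  qed
next
  fix x y z :: "real^'a"
  show "LD x z \<le> LD x y + LD y z"
    unfolding LD_le_iff
  proof
    fix i
    have "\<bar>ln (x $ i) - ln (z $ i)\<bar> \<le> \<bar>ln (x $ i) - ln (y $ i)\<bar> + \<bar>ln (y $ i) - ln (z $ i)\<bar>" by linarith
    thus "\<bar>ln (x $ i) - ln (z $ i)\<bar> \<le> LD x y + LD y z" using LD_ge[of x i y] LD_ge[of y i z] by linarith
  qed
qed

lemma LD_complete: "Metric_space.mcomplete (pos_orthant :: (real^'n::finite) set) LD"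
proof -
  interpret Metric_space "pos_orthant :: (real^'n) set" LD by (rule LD_metric)
  show ?thesis unfolding mcomplete_def
  proof (intro allI impI)
    fix \<sigma> :: "nat \<Rightarrow> real^'n"
    assume C: "MCauchy \<sigma>"
    have inM: "\<sigma> n \<in> pos_orthant" for n using C by (auto simp: MCauchy_def)
    have "Cauchy (\<lambda>n. ln (\<sigma> n $ i))" for i
    proof (rule metric_CauchyI)
      fix e :: real assume "e > 0"
      then obtain N where N: "\<forall>n n'. N \<le> n \<longrightarrow> N \<le> n' \<longrightarrow> LD (\<sigma> n) (\<sigma> n') < e"
        using C by (auto simp: MCauchy_def)
      show "\<exists>M. \<forall>m\<ge>M. \<forall>n\<ge>M. dist (ln (\<sigma> m $ i)) (ln (\<sigma> n $ i)) < e"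
        using N LD_ge[of "\<sigma> _" i "\<sigma> _"] by (metis dist_real_def le_less_trans)
    qed
    hence "\<forall>i. \<exists>l. (\<lambda>n. ln (\<sigma> n $ i)) \<longlonglongrightarrow> l"
      by (simp add: Cauchy_convergent_iff convergent_def)
    then obtain l where l: "\<And>i. (\<lambda>n. ln (\<sigma> n $ i)) \<longlonglongrightarrow> l i" by metis
    define x where "x = (\<chi> i. exp (l i))"
    have xM: "x \<in> pos_orthant" by (simp add: x_def pos_orthant_def)
    have "limitin mtopology \<sigma> x sequentially"
      unfolding limitin_metric
    proof (intro conjI allI impI xM)
      fix e :: real assume e: "e > 0"
      have "\<forall>\<^sub>F n in sequentially. \<forall>i. \<bar>ln (\<sigma> n $ i) - ln (x $ i)\<bar> < e"
      proof (rule eventually_all_finite)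
        fix i
        have "\<forall>\<^sub>F n in sequentially. dist (ln (\<sigma> n $ i)) (l i) < e"
          using l[of i] e by (rule tendstoD)
        thus "\<forall>\<^sub>F n in sequentially. \<bar>ln (\<sigma> n $ i) - ln (x $ i)\<bar> < e"
          by (simp add: x_def dist_real_def)
      qed
      thus "\<forall>\<^sub>F n in sequentially. \<sigma> n \<in> pos_orthant \<and> LD (\<sigma> n) x < e"
        by eventually_elim (simp add: inM LD_less_iff)
    qed
    thus "\<exists>x. limitin mtopology \<sigma> x sequentially" by blast
  qed
qed

lemma mono_lin:
  fixes A :: "real^'n::finite^'m" and x x' :: "real^'n"
  assumes "\<forall>i j. A $ i $ j \<ge> 0" "\<forall>j. x $ j \<le> k * x' $ j"
  shows "(A *v x) $ i \<le> k * (A *v x') $ i"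
proof -
  have "(\<Sum>j\<in>UNIV. A $ i $ j * x $ j) \<le> (\<Sum>j\<in>UNIV. k * (A $ i $ j * x' $ j))"
    by (rule sum_mono) (metis assms mult_left_mono mult.left_commute)
  thus ?thesis by (simp add: matrix_vector_mult_def sum_distrib_left)
qed


lemma Gz_pos:
  fixes G :: "real^'n::finite^'n"
  assumes "\<forall>i j. G $ i $ j > 0" "z \<in> pos_orthant"
  shows "(G *v z) $ i > 0"
  unfolding matrix_vector_mult_def
  using assms by (auto simp: pos_orthant_def intro!: sum_pos)

lemma g_pos:
  fixes G :: "real^'n::finite^'n"
  assumes G: "\<forall>i j. G $ i $ j > 0" and r: "\<forall>i. \<rho> $ i \<ge> 0" and s: "(\<Sum>i\<in>UNIV. \<rho> $ i) = 1"
    and z: "z \<in> pos_orthant"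
  shows "(transpose G *v (\<chi> i. \<rho> $ i / (G *v z) $ i)) $ j > 0"
proof -
  obtain k where k: "\<rho> $ k > 0"
  proof (rule ccontr)
    assume "\<not> thesis"
    hence "\<forall>k. \<rho> $ k = 0" using that r by (metis less_eq_real_def)
    thus False using s by simp
  qed
  have Gp: "\<And>i. (G *v z) $ i > 0" using Gz_pos[OF G z] .
  have nn: "\<forall>i\<in>UNIV. 0 \<le> G $ i $ j * (\<rho> $ i / (G *v z) $ i)"
    using G r Gp by (simp add: less_imp_le)
  have "0 < G $ k $ j * (\<rho> $ k / (G *v z) $ k)" using G k Gp[of k] by simp
  also have "\<dots> \<le> (\<Sum>i\<in>UNIV. G $ i $ j * (\<rho> $ i / (G *v z) $ i))"
    by (rule member_le_sum) (use nn in auto)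
  finally show ?thesis by (simp add: matrix_vector_mult_def transpose_def)
qed

lemma g_bnd1:
  fixes G :: "real^'n::finite^'n"
  assumes G: "\<forall>i j. G $ i $ j > 0" and r: "\<forall>i. \<rho> $ i \<ge> 0"
    and z: "z \<in> pos_orthant" and w: "w \<in> pos_orthant"
    and b: "\<forall>i. w $ i \<le> exp D * z $ i"
  shows "(transpose G *v (\<chi> i. \<rho> $ i / (G *v z) $ i)) $ j
     \<le> exp D * (transpose G *v (\<chi> i. \<rho> $ i / (G *v w) $ i)) $ j"
proof (rule mono_lin)
  show "\<forall>i j. 0 \<le> transpose G $ i $ j" using G by (simp add: transpose_def less_imp_le)
  show "\<forall>i. (\<chi> i. \<rho> $ i / (G *v z) $ i) $ i \<le> exp D * (\<chi> i. \<rho> $ i / (G *v w) $ i) $ i"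
  proof
    fix i
    have a: "(G *v z) $ i > 0" and bb: "(G *v w) $ i > 0" using Gz_pos G z w by blast+
    have "(G *v w) $ i \<le> exp D * (G *v z) $ i"
      by (rule mono_lin) (use G b in \<open>auto simp: less_imp_le\<close>)
    hence "\<rho> $ i * (G *v w) $ i \<le> \<rho> $ i * (exp D * (G *v z) $ i)"
      using r by (simp add: mult_left_mono)
    thus "(\<chi> i. \<rho> $ i / (G *v z) $ i) $ i \<le> exp D * (\<chi> i. \<rho> $ i / (G *v w) $ i) $ i"
      using a bb by (simp add: field_simps)
  qed
qed


theorem theorem2:
  fixes h \<beta> \<epsilon> :: real
    and \<rho> \<psi> :: "real^'n::finite"
    and C :: "real^'n^'n"
  assumes "h > 0" and "\<beta> > 0" and "\<epsilon> > 0"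
    and "\<forall>i. \<rho> $ i \<ge> 0" and "(\<Sum>i\<in>UNIV. \<rho> $ i) = 1"
    and "\<forall>i j. C $ i $ j \<ge> 0"
  shows "(\<forall>z\<in>pos_orthant. theta_map h \<beta> \<epsilon> \<rho> \<psi> C z \<in> pos_orthant)
       \<and> (\<exists>c<1. \<forall>z\<in>pos_orthant. \<forall>w\<in>pos_orthant.
            thompson_dist (theta_map h \<beta> \<epsilon> \<rho> \<psi> C z) (theta_map h \<beta> \<epsilon> \<rho> \<psi> C w)
              \<le> c * thompson_dist z w)
       \<and> (\<exists>!z. z \<in> pos_orthant \<and> theta_map h \<beta> \<epsilon> \<rho> \<psi> C z = z)"
proof -
  define G where "G = Gamma_mat \<epsilon> C"
  define c where "c = 1 / (1 + \<beta> * \<epsilon> / h)"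
  define g where "g = (\<lambda>z. transpose G *v (\<chi> i. \<rho> $ i / (G *v z) $ i))"
  define f where "f = theta_map h \<beta> \<epsilon> \<rho> \<psi> C"
  have bep: "\<beta> * \<epsilon> / h > 0" using assms by simp
  have c0: "c > 0" and c1: "c < 1" using bep by (auto simp: c_def)
  have Gp: "\<forall>i j. G $ i $ j > 0" by (simp add: G_def Gamma_mat_def)
  have xip: "\<And>j. xi_vec \<beta> \<psi> $ j > 0" by (simp add: xi_vec_def)
  have f_eq: "f z $ j = (xi_vec \<beta> \<psi> $ j / g z $ j) powr c" for z j
    by (simp add: f_def theta_map_def Let_def G_def g_def c_def)
  have gp: "g z $ j > 0" if "z \<in> pos_orthant" for z j
    unfolding g_def by (rule g_pos[OF Gp assms(4) assms(5) that])
  have fpos: "f z \<in> pos_orthant" if "z \<in> pos_orthant" for z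
    using gp[OF that] xip by (simp add: pos_orthant_def f_eq less_imp_neq[symmetric])
  have lnf: "ln (f z $ j) = c * (ln (xi_vec \<beta> \<psi> $ j) - ln (g z $ j))" if "z \<in> pos_orthant" for z j
    using gp[OF that, of j] xip[of j] by (simp add: f_eq ln_div)
  have contr: "LD (f z) (f w) \<le> c * LD z w" if z: "z \<in> pos_orthant" and w: "w \<in> pos_orthant" for z w
  proof -
    define D where "D = LD z w"
    have zp: "\<And>i. z $ i > 0" and wp: "\<And>i. w $ i > 0" using z w by (auto simp: pos_orthant_def)
    have bzw: "\<forall>i. z $ i \<le> exp D * w $ i \<and> w $ i \<le> exp D * z $ i"
      using LD_ge[of z _ w] ln_bnd zp wp unfolding D_def by blast
    show ?thesis unfolding LD_le_iff
    proof
      fix j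
      have 1: "g z $ j \<le> exp D * g w $ j"
        unfolding g_def by (rule g_bnd1[OF Gp assms(4) z w]) (use bzw in blast)
      have 2: "g w $ j \<le> exp D * g z $ j"
        unfolding g_def by (rule g_bnd1[OF Gp assms(4) w z]) (use bzw in blast)
      have "\<bar>ln (g z $ j) - ln (g w $ j)\<bar> \<le> D"
        using ln_bnd[OF gp[OF z] gp[OF w]] 1 2 by blast
      hence "c * \<bar>ln (g z $ j) - ln (g w $ j)\<bar> \<le> c * D" using c0 by simp
      moreover have "\<bar>ln (f z $ j) - ln (f w $ j)\<bar> = c * \<bar>ln (g z $ j) - ln (g w $ j)\<bar>"
        using c0 by (simp add: lnf[OF z] lnf[OF w] right_diff_distrib[symmetric] abs_mult abs_minus_commute)
      ultimately show "\<bar>ln (f z $ j) - ln (f w $ j)\<bar> \<le> c * LD z w" unfolding D_def by simp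
    qed
  qed
  interpret Metric_space "pos_orthant :: (real^'n) set" LD by (rule LD_metric)
  have ne: "pos_orthant \<noteq> ({} :: (real^'n) set)"
    using exI[of "\<lambda>x. x \<in> (pos_orthant :: (real^'n) set)" "\<chi> i. 1"] by (auto simp: pos_orthant_def)
  have fM: "f \<in> pos_orthant \<rightarrow> pos_orthant" using fpos by blast
  obtain x where x: "x \<in> pos_orthant" "f x = x"
    using Banach_fixedpoint_thm[OF LD_complete ne fM c1 contr] by blast
  have uniq: "y = x" if "y \<in> pos_orthant" "f y = y" for y
    using contraction_imp_unique_fixpoint[OF that(2) x(2) fM c1 contr that(1) x(1)] .
  have part2: "\<forall>z\<in>pos_orthant. \<forall>w\<in>pos_orthant. thompson_dist (f z) (f w) \<le> c * thompson_dist z w"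
    using contr fpos by (simp add: thompson_LD)
  show ?thesis
    unfolding f_def[symmetric]
    using fpos part2 c1 x uniq by blast
qed

end
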